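(* Let a domain $v$ be a triple $(\mu^{(v)}, f^{(v)}, g^{(v)})$ with $\mu^{(v)}$ a distribution on $\mathbb{R}^d$, $f^{(v)}:\mathbb{R}^d\to\mathbb{R}^{d'}$ and $g^{(v)}:\mathbb{R}^{d'}\to\mathcal{Y}$, and $h^{(v)}=g^{(v)}\circ f^{(v)}$. Let $u$ be the unseen domain and $s=1,\dots,S$ the seen domains. For $h=g\circ f$ define $R^{(v)}(h):=\mathbb{E}_{\bm{x}\sim\mu^{(v)}}[\ell(h(\bm{x}),h^{(v)}(\bm{x}))]$. Assume (i) $\ell$ is non-negative, symmetric, bounded by a finite positive number $L$, and satisfies the triangle inequality; and (ii) $f$ is invertible when restricted to the data manifold (the support of the input distributions). Then for all convex weights $\lambda^{(1)},\dots,\lambda^{(S)}$ (nonnegative, summing to one) and any such hypothesis $h=g\circ f$, \[ R^{(u)}(h)\le\sum_{s=1}^S\lambda^{(s)}R^{(s)}(h)+L\sum_{s=1}^S\lambda^{(s)}\|f_{\#}\mu^{(u)}-f_{\#}\mu^{(s)}\|_1+\sum_{s=1}^S\lambda^{(s)}\sigma^{(u,s)}, \] where $f_{\#}\mu^{(v)}$ is the pushforward of $\mu^{(v)}$ under $f$, $\|\cdot\|_1$ is the $L^1$ distance between densities, and $\sigma^{(u,s)}:=\min\{\mathbb{E}_{\bm{x}\sim\mu^{(u)}}[\ell(h^{(u)}(\bm{x}),h^{(s)}(\bm{x}))],\ \mathbb{E}_{\bm{x}\sim\mu^{(s)}}[\ell(h^{(u)}(\bm{x}),h^{(s)}(\b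m{x}))]\}$.
   Context: Domain generalization with $S$ seen domains and one unseen domain. *)

theory Defs
  imports "HOL-Probability.Probability"
begin

definition risk :: "('c \<Rightarrow> 'c \<Rightarrow> real) \<Rightarrow> 'a measure \<Rightarrow> ('a \<Rightarrow> 'c) \<Rightarrow> ('a \<Rightarrow> 'c) \<Rightarrow> real" where
  "risk loss mu hv h = (\<integral>x. loss (h x) (hv x) \<partial>mu)"

definition L1_dist :: "('b::euclidean_space \<Rightarrow> real) \<Rightarrow> ('b \<Rightarrow> real) \<Rightarrow> real" where
  "L1_dist p q = (\<integral>z. \<bar>p z - q z\<bar> \<partial>lborel)"

definition sigma_term :: "('c \<Rightarrow> 'c \<Rightarrow> real) \<Rightarrow> 'a measure \<Rightarrow> 'a measure \<Rightarrow> ('a \<Rightarrow> 'c) \<Rightarrow> ('a \<Rightarrow> 'c) \<Rightarrow> real" where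
  "sigma_term loss mu_u mu_s hu hs =
     min (\<integral>x. loss (hu x) (hs x) \<partial>mu_u) (\<integral>x. loss (hu x) (hs x) \<partial>mu_s)"

end

theory Submission
  imports Defs
begin

lemma transfer_lem:
  fixes mu :: "'a::euclidean_space measure" and f :: "'a \<Rightarrow> 'b::euclidean_space"
    and phi :: "'a \<Rightarrow> real"
  assumes ps: "prob_space mu" and sm: "sets mu = sets borel"
    and fm: "f \<in> borel \<rightarrow>\<^sub>M borel" and fim: "finv \<in> borel \<rightarrow>\<^sub>M borel"
    and inv: "\<forall>x\<in>M. finv (f x) = x" and Mb: "M \<in> sets borel" and M1: "emeasure mu M = 1"
    and pm: "p \<in> borel_measurable borel" and pn: "\<forall>z. 0 \<le> p z"
    and d: "distr mu borel f = density lborel (\<lambda>z. ennreal (p z))"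
    and phim: "phi \<in> borel_measurable borel"
  shows "integral\<^sup>L mu phi = (\<integral>z. p z * phi (finv z) \<partial>lborel)"
    and "integrable lborel p"
proof -
  interpret prob_space mu by (rule ps)
  have meq: "\<And>N. measurable mu N = measurable borel N" by (rule measurable_cong_sets[OF sm refl])
  have fm': "f \<in> mu \<rightarrow>\<^sub>M borel" unfolding meq by (rule fm)
  have phim': "phi \<in> borel_measurable mu" unfolding meq by (rule phim)
  have Mev: "M \<in> events" using Mb sm by simp
  have AE: "AE x in mu. x \<in> M"
    using AE_in_set_eq_1[OF Mev] M1 by (simp add: emeasure_eq_measure)
  have c: "(\<lambda>z. phi (finv z)) \<in> borel_measurable borel" using phim fim by measurable
  have "integral\<^sup>L mu phi = integral\<^sup>L mu (\<lambda>x. phi (finv (f x)))"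
  proof (rule integral_cong_AE[OF phim'])
    show "(\<lambda>x. phi (finv (f x))) \<in> borel_measurable mu"
      using measurable_comp[OF fm' c] by (simp add: comp_def)
    show "AE x in mu. phi x = phi (finv (f x))"
      using AE by eventually_elim (simp add: inv)
  qed
  also have "\<dots> = integral\<^sup>L (distr mu borel f) (\<lambda>z. phi (finv z))"
    by (rule integral_distr[symmetric, OF fm' c])
  also have "\<dots> = (\<integral>z. p z * phi (finv z) \<partial>lborel)"
    unfolding d using integral_density[of "\<lambda>z. phi (finv z)" lborel p] c pm pn by simp
  finally show "integral\<^sup>L mu phi = (\<integral>z. p z * phi (finv z) \<partial>lborel)" .
  have "prob_space (density lborel (\<lambda>z. ennreal (p z)))"
    using prob_space_distr[OF fm'] d by simp
  then have "emeasure (density lborel (\<lambda>z. ennreal (p z))) UNIV = 1"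
    using prob_space.emeasure_space_1 by fastforce
  then have "(\<integral>\<^sup>+z. ennreal (p z) \<partial>lborel) = ennreal 1"
    using pm by (simp add: emeasure_density)
  then show "integrable lborel p"
    using pm pn by (intro integrableI_nn_integral_finite) auto
qed

lemma diff_bound:
  fixes mu1 mu2 :: "'a::euclidean_space measure" and f :: "'a \<Rightarrow> 'b::euclidean_space"
    and phi :: "'a \<Rightarrow> real"
  assumes ps1: "prob_space mu1" and sm1: "sets mu1 = sets borel"
    and ps2: "prob_space mu2" and sm2: "sets mu2 = sets borel"
    and fm: "f \<in> borel \<rightarrow>\<^sub>M borel" and fim: "finv \<in> borel \<rightarrow>\<^sub>M borel"
    and inv: "\<forall>x\<in>M. finv (f x) = x" and Mb: "M \<in> sets borel"
    and M1: "emeasure mu1 M = 1" and M2: "emeasure mu2 M = 1"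
    and pm1: "p1 \<in> borel_measurable borel" and pn1: "\<forall>z. 0 \<le> p1 z"
    and d1: "distr mu1 borel f = density lborel (\<lambda>z. ennreal (p1 z))"
    and pm2: "p2 \<in> borel_measurable borel" and pn2: "\<forall>z. 0 \<le> p2 z"
    and d2: "distr mu2 borel f = density lborel (\<lambda>z. ennreal (p2 z))"
    and phim: "phi \<in> borel_measurable borel"
    and phib: "\<And>x. 0 \<le> phi x" "\<And>x. phi x \<le> L"
  shows "integral\<^sup>L mu1 phi \<le> integral\<^sup>L mu2 phi + L * L1_dist p1 p2"
proof -
  note t1 = transfer_lem[OF ps1 sm1 fm fim inv Mb M1 pm1 pn1 d1 phim]
  note t2 = transfer_lem[OF ps2 sm2 fm fim inv Mb M2 pm2 pn2 d2 phim]
  have c: "(\<lambda>z. phi (finv z)) \<in> borel_measurable borel" using phim fim by measurable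
  have L0: "0 \<le> L" using phib(1)[of undefined] phib(2)[of undefined] by linarith
  have i1: "integrable lborel (\<lambda>z. p1 z * phi (finv z))"
  proof (rule Bochner_Integration.integrable_bound[OF integrable_mult_left[OF t1(2), of L]])
    show "(\<lambda>z. p1 z * phi (finv z)) \<in> borel_measurable lborel" using c pm1 by simp
    show "AE x in lborel. norm (p1 x * phi (finv x)) \<le> norm (p1 x * L)"
      using pn1 phib L0 by (auto simp: abs_mult intro!: mult_mono)
  qed
  have i2: "integrable lborel (\<lambda>z. p2 z * phi (finv z))"
  proof (rule Bochner_Integration.integrable_bound[OF integrable_mult_left[OF t2(2), of L]])
    show "(\<lambda>z. p2 z * phi (finv z)) \<in> borel_measurable lborel" using c pm2 by simp
    show "AE x in lborel. norm (p2 x * phi (finv x)) \<le> norm (p2 x * L)"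
      using pn2 phib L0 by (auto simp: abs_mult intro!: mult_mono)
  qed
  have iabs: "integrable lborel (\<lambda>z. \<bar>p1 z - p2 z\<bar>)"
    using t1(2) t2(2) by auto
  have "integral\<^sup>L mu1 phi - integral\<^sup>L mu2 phi
      = (\<integral>z. p1 z * phi (finv z) - p2 z * phi (finv z) \<partial>lborel)"
    using t1(1) t2(1) i1 i2 by simp
  also have "\<dots> \<le> (\<integral>z. L * \<bar>p1 z - p2 z\<bar> \<partial>lborel)"
  proof (rule integral_mono)
    show "integrable lborel (\<lambda>z. p1 z * phi (finv z) - p2 z * phi (finv z))" using i1 i2 by simp
    show "integrable lborel (\<lambda>z. L * \<bar>p1 z - p2 z\<bar>)" using iabs by simp
    fix z
    have "p1 z * phi (finv z) - p2 z * phi (finv z) = (p1 z - p2 z) * phi (finv z)"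
      by (simp add: algebra_simps)
    also have "\<dots> \<le> \<bar>p1 z - p2 z\<bar> * phi (finv z)"
      using phib(1) by (intro mult_right_mono) auto
    also have "\<dots> \<le> \<bar>p1 z - p2 z\<bar> * L"
      using phib(2) by (intro mult_left_mono) auto
    finally show "p1 z * phi (finv z) - p2 z * phi (finv z) \<le> L * \<bar>p1 z - p2 z\<bar>"
      by (simp add: mult.commute)
  qed
  also have "\<dots> = L * L1_dist p1 p2" by (simp add: L1_dist_def)
  finally show ?thesis by simp
qed

theorem lemma2:
  fixes loss :: "'c \<Rightarrow> 'c \<Rightarrow> real" and L :: real and Y :: "'c measure"
    and mu_u :: "'a::euclidean_space measure" and f_u :: "'a \<Rightarrow> 'b::euclidean_space" and g_u :: "'b \<Rightarrow> 'c"
    and mu_s :: "nat \<Rightarrow> 'a measure" and f_s :: "nat \<Rightarrow> 'a \<Rightarrow> 'b" and g_s :: "nat \<Rightarrow> 'b \<Rightarrow> 'c"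
    and S :: nat and lam :: "nat \<Rightarrow> real"
    and f :: "'a \<Rightarrow> 'b" and g :: "'b \<Rightarrow> 'c"
    and M :: "'a set" and p_u :: "'b \<Rightarrow> real" and p_s :: "nat \<Rightarrow> 'b \<Rightarrow> real"
  assumes loss_nonneg: "\<And>a b. 0 \<le> loss a b"
    and loss_sym: "\<And>a b. loss a b = loss b a"
    and L_pos: "0 < L"
    and loss_bdd: "\<And>a b. loss a b \<le> L"
    and loss_tri: "\<And>a b c. loss a c \<le> loss a b + loss b c"
    and loss_meas: "(\<lambda>(a, b). loss a b) \<in> borel_measurable (Y \<Otimes>\<^sub>M Y)"
    and dom_u: "prob_space mu_u" "sets mu_u = sets borel"
      "f_u \<in> borel \<rightarrow>\<^sub>M borel" "g_u \<in> borel \<rightarrow>\<^sub>M Y"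
    and dom_s: "\<forall>s\<in>{1..S}. prob_space (mu_s s) \<and> sets (mu_s s) = sets borel \<and>
                   f_s s \<in> borel \<rightarrow>\<^sub>M borel \<and> g_s s \<in> borel \<rightarrow>\<^sub>M Y"
    and hyp: "f \<in> borel \<rightarrow>\<^sub>M borel" "g \<in> borel \<rightarrow>\<^sub>M Y"
    and manifold: "M \<in> sets borel" "emeasure mu_u M = 1" "\<forall>s\<in>{1..S}. emeasure (mu_s s) M = 1"
    and f_inv: "inj_on f M" "\<exists>finv \<in> borel \<rightarrow>\<^sub>M borel. \<forall>x\<in>M. finv (f x) = x"
    and dens_u: "p_u \<in> borel_measurable borel" "\<forall>z. 0 \<le> p_u z"
      "distr mu_u borel f = density lborel (\<lambda>z. ennreal (p_u z))"
    and dens_s: "\<forall>s\<in>{1..S}. p_s s \<in> borel_measurable borel \<and> (\<forall>z. 0 \<le> p_s s z) \<and>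
                   distr (mu_s s) borel f = density lborel (\<lambda>z. ennreal (p_s s z))"
    and weights: "\<forall>s\<in>{1..S}. 0 \<le> lam s" "(\<Sum>s=1..S. lam s) = 1"
  shows "risk loss mu_u (g_u \<circ> f_u) (g \<circ> f)
         \<le> (\<Sum>s=1..S. lam s * risk loss (mu_s s) (g_s s \<circ> f_s s) (g \<circ> f))
           + L * (\<Sum>s=1..S. lam s * L1_dist p_u (p_s s))
           + (\<Sum>s=1..S. lam s * sigma_term loss mu_u (mu_s s) (g_u \<circ> f_u) (g_s s \<circ> f_s s))"
proof -
  obtain finv where fim: "finv \<in> borel \<rightarrow>\<^sub>M borel" and inv: "\<forall>x\<in>M. finv (f x) = x"
    using f_inv(2) by blast
  define h where "h = g \<circ> f"
  define hu where "hu = g_u \<circ> f_u"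
  have hm: "h \<in> borel \<rightarrow>\<^sub>M Y" unfolding h_def using hyp by (auto intro: measurable_comp)
  have hum: "hu \<in> borel \<rightarrow>\<^sub>M Y" unfolding hu_def using dom_u by (auto intro: measurable_comp)
  have lm: "(\<lambda>x. loss (a x) (b x)) \<in> borel_measurable borel"
    if "a \<in> borel \<rightarrow>\<^sub>M Y" "b \<in> borel \<rightarrow>\<^sub>M Y" for a b
    using measurable_comp[OF measurable_Pair[OF that] loss_meas] by (simp add: comp_def)
  have integ: "integrable mu (\<lambda>x. loss (a x) (b x))"
    if "prob_space mu" "sets mu = sets borel" "a \<in> borel \<rightarrow>\<^sub>M Y" "b \<in> borel \<rightarrow>\<^sub>M Y"
    for mu :: "'a measure" and a b
  proof -
    interpret prob_space mu by (rule that(1))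
    have "(\<lambda>x. loss (a x) (b x)) \<in> borel_measurable mu"
      unfolding measurable_cong_sets[OF that(2) refl] by (rule lm[OF that(3,4)])
    then show ?thesis
      by (intro integrable_const_bound[where B=L]) (auto simp: loss_nonneg loss_bdd)
  qed
  have tri: "(\<integral>x. loss (h x) (hu x) \<partial>mu) \<le> (\<integral>x. loss (h x) (b x) \<partial>mu) + (\<integral>x. loss (hu x) (b x) \<partial>mu)"
    if "prob_space mu" "sets mu = sets borel" "b \<in> borel \<rightarrow>\<^sub>M Y" for mu :: "'a measure" and b
  proof -
    have "(\<integral>x. loss (h x) (hu x) \<partial>mu) \<le> (\<integral>x. loss (h x) (b x) + loss (hu x) (b x) \<partial>mu)"
      using integ[OF that(1,2) hm hum] integ[OF that(1,2) hm that(3)] integ[OF that(1,2) hum that(3)]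
      by (intro integral_mono) (auto, metis loss_tri loss_sym)
    also have "\<dots> = (\<integral>x. loss (h x) (b x) \<partial>mu) + (\<integral>x. loss (hu x) (b x) \<partial>mu)"
      using integ[OF that(1,2) hm that(3)] integ[OF that(1,2) hum that(3)] by simp
    finally show ?thesis .
  qed
  have per: "risk loss mu_u hu h \<le> risk loss (mu_s s) (g_s s \<circ> f_s s) h
      + L * L1_dist p_u (p_s s) + sigma_term loss mu_u (mu_s s) hu (g_s s \<circ> f_s s)"
    if s: "s \<in> {1..S}" for s
  proof -
    define hs where "hs = g_s s \<circ> f_s s"
    have ps: "prob_space (mu_s s)" "sets (mu_s s) = sets borel" using dom_s s by auto
    have hsm: "hs \<in> borel \<rightarrow>\<^sub>M Y" unfolding hs_def using dom_s s by (auto intro: measurable_comp)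
    have ds: "p_s s \<in> borel_measurable borel" "\<forall>z. 0 \<le> p_s s z"
      "distr (mu_s s) borel f = density lborel (\<lambda>z. ennreal (p_s s z))" using dens_s s by auto
    have Ms: "emeasure (mu_s s) M = 1" using manifold(3) s by auto
    have db: "integral\<^sup>L mu_u (\<lambda>x. loss (a x) (b x)) \<le> integral\<^sup>L (mu_s s) (\<lambda>x. loss (a x) (b x)) + L * L1_dist p_u (p_s s)"
      if "a \<in> borel \<rightarrow>\<^sub>M Y" "b \<in> borel \<rightarrow>\<^sub>M Y" for a b
      by (rule diff_bound[OF dom_u(1,2) ps hyp(1) fim inv manifold(1,2) Ms dens_u ds lm[OF that]])
        (auto simp: loss_nonneg loss_bdd)
    have A1: "(\<integral>x. loss (h x) (hu x) \<partial>mu_u) \<le> (\<integral>x. loss (h x) (hs x) \<partial>mu_u) + (\<integral>x. loss (hu x) (hs x) \<partial>mu_u)"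
      by (rule tri[OF dom_u(1,2) hsm])
    note A2 = db[OF hm hsm]
    note B1 = db[OF hm hum]
    have B2: "(\<integral>x. loss (h x) (hu x) \<partial>mu_s s) \<le> (\<integral>x. loss (h x) (hs x) \<partial>mu_s s) + (\<integral>x. loss (hu x) (hs x) \<partial>mu_s s)"
      by (rule tri[OF ps hsm])
    show ?thesis
      using A1 A2 B1 B2 unfolding risk_def sigma_term_def hs_def[symmetric] min_def
      by (auto split: if_splits)
  qed
  have "risk loss mu_u hu h = (\<Sum>s=1..S. lam s * risk loss mu_u hu h)"
    using weights(2) by (simp add: sum_distrib_right[symmetric])
  also have "\<dots> \<le> (\<Sum>s=1..S. lam s * (risk loss (mu_s s) (g_s s \<circ> f_s s) h
      + L * L1_dist p_u (p_s s) + sigma_term loss mu_u (mu_s s) hu (g_s s \<circ> f_s s)))"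
    using per weights(1) by (intro sum_mono mult_left_mono) auto
  also have "\<dots> = (\<Sum>s=1..S. lam s * risk loss (mu_s s) (g_s s \<circ> f_s s) h)
           + L * (\<Sum>s=1..S. lam s * L1_dist p_u (p_s s))
           + (\<Sum>s=1..S. lam s * sigma_term loss mu_u (mu_s s) hu (g_s s \<circ> f_s s))"
    by (simp add: distrib_left sum.distrib sum_distrib_left algebra_simps)
  finally show ?thesis unfolding h_def hu_def .
qed

end
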